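(* Consider the stochastic energy exchange model and the notation of the context. For every sufficiently small $\eta>0$ there is a constant $C>0$ depending on $N$ and $\eta$ such that for every $\mathbf{E}\in\mathbb{R}^N_+$, $1\le n\le N$ and $1\le k\le N-n+1$, $$\mathbb{E}_{\mathbf{E}}\big[V_{n,k}(\mathbf{E}_{\tau_1^+})\mathbf{1}_{\mathcal{C}_k(\tau_1)}\big]\le\frac{C}{\mathcal{R}}\Big(\sum_{i=0}^{n-1}E_{k+i}\Big)^{a_n\eta-\frac12}$$ and $$\mathbb{E}_{\mathbf{E}}\big[V_{n,k}(\mathbf{E}_{\tau_1^+})\mathbf{1}_{\mathcal{C}_{k+n}(\tau_1)}\big]\le\frac{C}{\mathcal{R}}\Big(\sum_{i=0}^{n-1}E_{k+i}\Big)^{a_n\eta-\frac12}.$$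
   Context: Fix $N\ge1$, $T_L,T_R>0$, a sufficiently large $K$ ($K\gg T_L,T_R$) and $R(a,b)=\min\{K,\sqrt{\min(a,b)}\}$. Write $E_0:=T_L$, $E_{N+1}:=T_R$. The stochastic energy exchange model is the Markov jump process $\mathbf{E}_t=(E_1(t),\dots,E_N(t))$ on $\mathbb{R}^N_+$ with independent exponential clocks $i=1,\dots,N+1$, clock $i$ having rate $R_i=R(E_{i-1},E_i)$. When clock $i$ with $2\le i\le N$ rings, $(E_{i-1},E_i)\mapsto(p(E_{i-1}+E_i),(1-p)(E_{i-1}+E_i))$, $p$ uniform on $(0,1)$; when clock $1$ (resp. $N+1$) rings, $E_1\mapsto p(E_1+X_L)$ (resp. $E_N\mapsto p(E_N+X_R)$), $X_L,X_R$ exponential with means $T_L,T_R$; all randomness independent. Let $\tau_1$ be the time of the first clock ring, $\mathcal{C}_i(\tau_1)$ the event that the ring at $\tau_1$ is clock $i$, $\mathbf{E}_{\tau_1^+}$ the configuration immediately after that ring, $\mathcal{R}=\sum_{i=1}^{N+1}R_i$, and $\mathbb{E}_{\mathbf{E}}$ expectation with $\mathbf{E}_0=\mathbf{E}$. Let $a_m=1-\frac{2^{m-1}-1}{2^N-1}$ and $V_{n,k}(\mathbf{E})=\big(\sum_{j=0}^{n-1}E_{k+j}\big)^{a_n\eta-1}$. *)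

theory Defs
  imports "HOL-Probability.Probability"
begin

text \<open>Configurations are functions nat => real; only indices 1..N are meaningful.
  The boundary values E_0 = TL and E_(N+1) = TR are supplied by ext_cfg.\<close>

definition ext_cfg :: "real \<Rightarrow> real \<Rightarrow> nat \<Rightarrow> (nat \<Rightarrow> real) \<Rightarrow> nat \<Rightarrow> real" where
  "ext_cfg TL TR N E i = (if i = 0 then TL else if i = N + 1 then TR else E i)"

definition rate_fun :: "real \<Rightarrow> real \<Rightarrow> real \<Rightarrow> real" where
  "rate_fun K a b = min K (sqrt (min a b))"

definition clock_rate :: "real \<Rightarrow> real \<Rightarrow> real \<Rightarrow> nat \<Rightarrow> (nat \<Rightarrow> real) \<Rightarrow> nat \<Rightarrow> real" where
  "clock_rate K TL TR N E i = rate_fun K (ext_cfg TL TR N E (i - 1)) (ext_cfg TL TR N E i)"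

definition total_rate :: "real \<Rightarrow> real \<Rightarrow> real \<Rightarrow> nat \<Rightarrow> (nat \<Rightarrow> real) \<Rightarrow> real" where
  "total_rate K TL TR N E = (\<Sum>i = 1..N + 1. clock_rate K TL TR N E i)"

definition jump :: "nat \<Rightarrow> (nat \<Rightarrow> real) \<Rightarrow> nat \<Rightarrow> real \<Rightarrow> real \<Rightarrow> real \<Rightarrow> nat \<Rightarrow> real" where
  "jump N E i p xL xR =
     (if i = 1 then E(1 := p * (E 1 + xL))
      else if i = N + 1 then E(N := p * (E N + xR))
      else E(i - 1 := p * (E (i - 1) + E i), i := (1 - p) * (E (i - 1) + E i)))"

text \<open>Probability space of the first ring: independent exponential clocks
  (clock j with rate R_j), p uniform on (0,1), X_L, X_R exponential with means TL, TR.\<close>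
definition first_ring_space :: "real \<Rightarrow> real \<Rightarrow> real \<Rightarrow> nat \<Rightarrow> (nat \<Rightarrow> real)
     \<Rightarrow> ((nat \<Rightarrow> real) \<times> real \<times> real \<times> real) measure" where
  "first_ring_space K TL TR N E =
     (PiM {1..N + 1} (\<lambda>j. density lborel (exponential_density (clock_rate K TL TR N E j))))
     \<Otimes>\<^sub>M (uniform_measure lborel {0<..<1}
     \<Otimes>\<^sub>M (density lborel (exponential_density (1 / TL))
     \<Otimes>\<^sub>M density lborel (exponential_density (1 / TR))))"

definition ring_first :: "nat \<Rightarrow> nat \<Rightarrow> (nat \<Rightarrow> real) set" where
  "ring_first N i = {t. \<forall>j \<in> {1..N + 1}. j \<noteq> i \<longrightarrow> t i < t j}"

text \<open>E_E [ f(E_(tau_1 +)) 1_(C_i(tau_1)) ] for nonnegative f.\<close>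
definition first_ring_exp :: "real \<Rightarrow> real \<Rightarrow> real \<Rightarrow> nat \<Rightarrow> (nat \<Rightarrow> real) \<Rightarrow> nat
     \<Rightarrow> ((nat \<Rightarrow> real) \<Rightarrow> ennreal) \<Rightarrow> ennreal" where
  "first_ring_exp K TL TR N E i f =
     (\<integral>\<^sup>+ \<omega>. indicator (ring_first N i) (fst \<omega>) *
         f (jump N E i (fst (snd \<omega>)) (fst (snd (snd \<omega>))) (snd (snd (snd \<omega>))))
       \<partial>first_ring_space K TL TR N E)"

definition a_coef :: "nat \<Rightarrow> nat \<Rightarrow> real" where
  "a_coef N m = 1 - (2 ^ (m - 1) - 1) / (2 ^ N - 1)"

definition V_fun :: "nat \<Rightarrow> real \<Rightarrow> nat \<Rightarrow> nat \<Rightarrow> (nat \<Rightarrow> real) \<Rightarrow> real" where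
  "V_fun N \<eta> n k E = (\<Sum>j < n. E (k + j)) powr (a_coef N n * \<eta> - 1)"

end

theory Submission imports Defs "HOL-Analysis.Analysis" begin

lemma nn_integral_pair_mult:
  assumes "sigma_finite_measure M1" "sigma_finite_measure M2"
    and [measurable]: "f \<in> borel_measurable M1" "g \<in> borel_measurable M2"
  shows "(\<integral>\<^sup>+\<omega>. f (fst \<omega>) * g (snd \<omega>) \<partial>(M1 \<Otimes>\<^sub>M M2)) = (\<integral>\<^sup>+x. f x \<partial>M1) * (\<integral>\<^sup>+y. g y \<partial>M2)"
proof -
  interpret M2: sigma_finite_measure M2 by fact
  have "(\<integral>\<^sup>+\<omega>. f (fst \<omega>) * g (snd \<omega>) \<partial>(M1 \<Otimes>\<^sub>M M2)) = (\<integral>\<^sup>+x. \<integral>\<^sup>+y. f x * g y \<partial>M2 \<partial>M1)"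
    by (subst M2.nn_integral_fst[symmetric]) auto
  also have "\<dots> = (\<integral>\<^sup>+x. f x * (\<integral>\<^sup>+y. g y \<partial>M2) \<partial>M1)"
    by (simp add: nn_integral_cmult)
  also have "\<dots> = (\<integral>\<^sup>+x. f x \<partial>M1) * (\<integral>\<^sup>+y. g y \<partial>M2)"
    by (rule nn_integral_multc) simp
  finally show ?thesis .
qed

lemma emeasure_exp_gt:
  assumes l: "0 < l"
  shows "emeasure (density lborel (exponential_density l)) {y<..} = ennreal (if 0 \<le> y then exp (- y * l) else 1)"
proof -
  let ?M = "density lborel (exponential_density l)"
  interpret prob_space ?M using prob_space_exponential_density[OF l] .
  have "{y<..} = space ?M - {..y}" by auto
  hence "emeasure ?M {y<..} = emeasure ?M (space ?M) - emeasure ?M {..y}"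
    using emeasure_compl[of "{..y}" ?M] by (simp add: emeasure_space_1)
  also have "\<dots> = 1 - ennreal (erlang_CDF 0 l y)"
    using emeasure_erlang_density[OF l, of 0 y] emeasure_space_1 by simp
  also have "\<dots> = ennreal (if 0 \<le> y then exp (- y * l) else 1)"
  proof (cases "0 \<le> y")
    case True
    have "exp (- (l * y)) \<le> 1" using True l by simp
    hence "1 - ennreal (1 - exp (- (l * y))) = ennreal (exp (- (l * y)))"
      by (subst ennreal_1[symmetric], subst ennreal_minus) auto
    thus ?thesis using True by (simp add: erlang_CDF_0 mult.commute)
  qed (simp add: erlang_CDF_0)
  finally show ?thesis .
qed

lemma nn_integral_exp_density_1:
  assumes l: "0 < l"
  shows "(\<integral>\<^sup>+x. ennreal (exponential_density l x) \<partial>lborel) = 1"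
proof -
  interpret prob_space "density lborel (exponential_density l)" using prob_space_exponential_density[OF l] .
  show ?thesis using emeasure_space_1 by (simp add: emeasure_density)
qed

lemma nn_integral_exp_density_top:
  assumes l: "0 < l"
  shows "(\<integral>\<^sup>+x. (if 0 \<le> x then 1 else \<top>) \<partial>density lborel (exponential_density l)) = 1"
proof -
  have "(\<integral>\<^sup>+x. (if 0 \<le> x then 1 else \<top>) \<partial>density lborel (exponential_density l))
     = (\<integral>\<^sup>+x. ennreal (exponential_density l x) * (if 0 \<le> x then 1 else \<top>) \<partial>lborel)"
    by (subst nn_integral_density) auto
  also have "\<dots> = (\<integral>\<^sup>+x. ennreal (exponential_density l x) \<partial>lborel)"
    by (intro nn_integral_cong) (auto simp: exponential_density_def)
  finally show ?thesis using nn_integral_exp_density_1[OF l] by simp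
qed

lemma first_prob:
  fixes r :: "nat \<Rightarrow> real" and I :: "nat set"
  assumes fin: "finite I" and kI: "k \<in> I" and pos: "\<And>j. j \<in> I \<Longrightarrow> 0 < r j"
  shows "(\<integral>\<^sup>+ t. indicator {t. \<forall>j\<in>I. j \<noteq> k \<longrightarrow> t k < t j} t
            \<partial>PiM I (\<lambda>j. density lborel (exponential_density (r j))))
         = ennreal (r k / (\<Sum>j\<in>I. r j))"
proof -
  define r' where "r' j = (if j \<in> I then r j else 1)" for j
  have r'pos: "0 < r' j" for j using pos by (auto simp: r'_def)
  define M where "M j = density lborel (exponential_density (r' j))" for j
  have PiMeq: "PiM I (\<lambda>j. density lborel (exponential_density (r j))) = PiM I M"
    by (rule PiM_cong) (auto simp: M_def r'_def)
  have probM: "prob_space (M j)" for j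
    unfolding M_def by (rule prob_space_exponential_density[OF r'pos])
  interpret P: product_sigma_finite M
    unfolding product_sigma_finite_def using prob_space_imp_sigma_finite[OF probM] by blast
  define J where "J = I - {k}"
  have IJ: "I = insert k J" "k \<notin> J" "finite J" using kI fin by (auto simp: J_def)
  have sM[simp]: "sets (M j) = sets borel" for j by (simp add: M_def)
  have ind_eq: "indicator {t. \<forall>j\<in>I. j \<noteq> k \<longrightarrow> t k < t j} t
      = (\<Prod>j\<in>J. (if t k < t j then 1 else 0 :: ennreal))" for t :: "nat \<Rightarrow> real"
  proof -
    have "(\<Prod>j\<in>J. (if t k < t j then 1 else 0 :: ennreal)) = (if \<forall>j\<in>J. t k < t j then 1 else 0)"
      using IJ(3) by (induction J rule: finite_induct) auto
    thus ?thesis by (auto simp: J_def indicator_def)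
  qed
  have meas: "(\<lambda>t. \<Prod>j\<in>J. (if t k < t j then 1 else 0 :: ennreal)) \<in> borel_measurable (PiM (insert k J) M)"
  proof -
    have comp: "i \<in> insert k J \<Longrightarrow> (\<lambda>w. w i) \<in> borel_measurable (PiM (insert k J) M)" for i
      using measurable_component_singleton[of i "insert k J" M]
        measurable_cong_sets[OF refl, of borel "M i" "PiM (insert k J) M"] by simp
    show ?thesis by (intro borel_measurable_prod_ennreal) (measurable, auto intro: comp)
  qed
  define R where "R = (\<Sum>j\<in>I. r j)"
  have RJ: "R = r k + (\<Sum>j\<in>J. r j)" unfolding R_def IJ(1) using IJ by simp
  have "0 \<le> (\<Sum>j\<in>J. r j)" using pos by (intro sum_nonneg) (auto simp: J_def less_imp_le)
  hence Rpos: "0 < R" using RJ pos[OF kI] by simp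
  have "(\<integral>\<^sup>+ t. indicator {t. \<forall>j\<in>I. j \<noteq> k \<longrightarrow> t k < t j} t \<partial>PiM I M)
      = (\<integral>\<^sup>+ t. (\<Prod>j\<in>J. (if t k < t j then 1 else 0 :: ennreal)) \<partial>PiM (insert k J) M)"
    by (subst IJ(1)[symmetric], intro nn_integral_cong) (rule ind_eq)
  also have "\<dots> = (\<integral>\<^sup>+ y. (\<integral>\<^sup>+ x. (\<Prod>j\<in>J. (if (x(k:=y)) k < (x(k:=y)) j then 1 else 0 :: ennreal)) \<partial>PiM J M) \<partial>M k)"
    by (rule P.product_nn_integral_insert_rev[OF IJ(3) IJ(2) meas])
  also have "\<dots> = (\<integral>\<^sup>+ y. (\<integral>\<^sup>+ x. (\<Prod>j\<in>J. indicator {y<..} (x j)) \<partial>PiM J M) \<partial>M k)"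
    using IJ(2) by (intro nn_integral_cong prod.cong) (auto simp: indicator_def)
  also have "\<dots> = (\<integral>\<^sup>+ y. (\<Prod>j\<in>J. emeasure (M j) {y<..}) \<partial>M k)"
    by (intro nn_integral_cong, subst P.product_nn_integral_prod) (auto simp: IJ(3) measurable_cong_sets[OF sM refl])
  also have "\<dots> = (\<integral>\<^sup>+ y. (\<Prod>j\<in>J. ennreal (if 0 \<le> y then exp (- y * r j) else 1)) \<partial>M k)"
  proof (intro nn_integral_cong prod.cong refl)
    fix y j assume "j \<in> J"
    hence "j \<in> I" by (simp add: J_def)
    thus "emeasure (M j) {y<..} = ennreal (if 0 \<le> y then exp (- y * r j) else 1)"
      using emeasure_exp_gt[OF pos[OF \<open>j \<in> I\<close>], of y] by (simp add: M_def r'_def)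
  qed
  also have "\<dots> = (\<integral>\<^sup>+ y. ennreal (exponential_density (r k) y) * (\<Prod>j\<in>J. ennreal (if 0 \<le> y then exp (- y * r j) else 1)) \<partial>lborel)"
    unfolding M_def using kI by (subst nn_integral_density) (auto simp: r'_def)
  also have "\<dots> = (\<integral>\<^sup>+ y. ennreal (r k / R) * ennreal (exponential_density R y) \<partial>lborel)"
  proof (intro nn_integral_cong)
    fix y :: real
    show "ennreal (exponential_density (r k) y) * (\<Prod>j\<in>J. ennreal (if 0 \<le> y then exp (- y * r j) else 1))
        = ennreal (r k / R) * ennreal (exponential_density R y)"
    proof (cases "0 \<le> y")
      case True
      have "(\<Prod>j\<in>J. ennreal (if 0 \<le> y then exp (- y * r j) else 1)) = ennreal (\<Prod>j\<in>J. exp (- y * r j))"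
        using True by (simp add: prod_ennreal)
      also have "(\<Prod>j\<in>J. exp (- y * r j)) = exp (- y * (\<Sum>j\<in>J. r j))"
        using IJ(3) by (simp add: exp_sum[symmetric] sum_distrib_left sum_negf)
      finally have "(\<Prod>j\<in>J. ennreal (if 0 \<le> y then exp (- y * r j) else 1)) = ennreal (exp (- y * (\<Sum>j\<in>J. r j)))" .
      moreover have "r k * exp (- y * r k) * exp (- y * (\<Sum>j\<in>J. r j)) = r k / R * (R * exp (- y * R))"
      proof -
        have "exp (- y * r k) * exp (- y * (\<Sum>j\<in>J. r j)) = exp (- y * R)"
          by (simp add: RJ exp_add[symmetric] algebra_simps)
        moreover have "r k / R * (R * exp (- y * R)) = r k * exp (- y * R)" using Rpos by simp
        ultimately show ?thesis by (simp add: mult.assoc)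
      qed
      ultimately show ?thesis using True pos[OF kI] Rpos
        by (simp add: exponential_density_def ennreal_mult[symmetric])
    qed (simp add: exponential_density_def)
  qed
  also have "\<dots> = ennreal (r k / R)"
    by (subst nn_integral_cmult) (auto simp: nn_integral_exp_density_1[OF Rpos])
  finally show ?thesis using PiMeq by (simp add: R_def)
qed

lemma unif_int:
  fixes c :: real
  assumes c: "0 < c"
  shows "(\<integral>\<^sup>+p. (if 0 < p \<and> p < 1 then ennreal (p powr (c-1) + (1-p) powr (c-1)) else \<top>)
            \<partial>uniform_measure lborel {0<..<(1::real)}) = ennreal (Beta c 1 + Beta 1 c)"
proof -
  define F where "F p = (if p \<in> {0<..<1} then p powr (c-1) * (1-p) powr (1-1) + p powr (1-1) * (1-p) powr (c-1) else 0)" for p :: real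
  have "((\<lambda>p. p powr (c-1) * (1-p) powr (1-1)) has_integral Beta c 1) {0<..<1}"
    using has_integral_Beta_real[of c 1] c by (simp add: has_integral_Icc_iff_Ioo)
  moreover have "((\<lambda>p. p powr (1-1) * (1-p) powr (c-1)) has_integral Beta 1 c) {0<..<1}"
    using has_integral_Beta_real[of 1 c] c by (simp add: has_integral_Icc_iff_Ioo)
  ultimately have "((\<lambda>p. p powr (c-1) * (1-p) powr (1-1) + p powr (1-1) * (1-p) powr (c-1)) has_integral (Beta c 1 + Beta 1 c)) {0<..<1}"
    by (rule has_integral_add)
  hence HI: "(F has_integral (Beta c 1 + Beta 1 c)) UNIV"
    unfolding F_def by (subst has_integral_restrict_UNIV)
  have Fm: "F \<in> borel_measurable borel" unfolding F_def by measurable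
  have Fnn: "0 \<le> F p" for p unfolding F_def by auto
  have "(\<integral>\<^sup>+p. (if 0 < p \<and> p < 1 then ennreal (p powr (c-1) + (1-p) powr (c-1)) else \<top>)
            \<partial>uniform_measure lborel {0<..<(1::real)})
     = (\<integral>\<^sup>+p. (if 0 < p \<and> p < 1 then ennreal (p powr (c-1) + (1-p) powr (c-1)) else \<top>) * indicator {0<..<1} p \<partial>lborel) / emeasure lborel {0<..<(1::real)}"
    by (rule nn_integral_uniform_measure) auto
  also have "\<dots> = (\<integral>\<^sup>+p. ennreal (F p) \<partial>lborel)"
  proof -
    have "emeasure lborel {0<..<(1::real)} = 1" by simp
    moreover have "(\<integral>\<^sup>+p. (if 0 < p \<and> p < 1 then ennreal (p powr (c-1) + (1-p) powr (c-1)) else \<top>) * indicator {0<..<1} p \<partial>lborel) = (\<integral>\<^sup>+p. ennreal (F p) \<partial>lborel)"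
      by (intro nn_integral_cong) (auto simp: F_def indicator_def)
    ultimately show ?thesis by (simp add: divide_ennreal_def)
  qed
  also have "\<dots> = ennreal (Beta c 1 + Beta 1 c)"
    by (rule nn_integral_has_integral_lborel[OF Fm Fnn HI])
  finally show ?thesis .
qed

lemma meas_ring:
  assumes fin: "finite I" and iI: "i \<in> I" and sM: "\<And>j. j \<in> I \<Longrightarrow> sets (M j) = sets borel"
  shows "(indicator {t. \<forall>j\<in>I. j \<noteq> i \<longrightarrow> t i < t j} :: _ \<Rightarrow> ennreal) \<in> borel_measurable (PiM I (M :: nat \<Rightarrow> real measure))"
proof -
  define J where "J = I - {i}"
  have ind_eq: "(indicator {t. \<forall>j\<in>I. j \<noteq> i \<longrightarrow> t i < t j} :: (nat \<Rightarrow> real) \<Rightarrow> ennreal)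
      = (\<lambda>t. \<Prod>j\<in>J. (if t i < t j then 1 else 0 :: ennreal))"
  proof (rule ext)
    fix t :: "nat \<Rightarrow> real"
    have "finite J" using fin by (simp add: J_def)
    hence "(\<Prod>j\<in>J. (if t i < t j then 1 else 0 :: ennreal)) = (if \<forall>j\<in>J. t i < t j then 1 else 0)"
      by (induction J rule: finite_induct) auto
    thus "indicator {t. \<forall>j\<in>I. j \<noteq> i \<longrightarrow> t i < t j} t = (\<Prod>j\<in>J. (if t i < t j then 1 else 0 :: ennreal))"
      by (auto simp: J_def indicator_def)
  qed
  have comp: "j \<in> I \<Longrightarrow> (\<lambda>w. w j) \<in> borel_measurable (PiM I M)" for j
    using measurable_component_singleton[of j I M]
      measurable_cong_sets[OF refl, of borel "M j" "PiM I M"] sM[of j] by simp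
  have "(\<lambda>t. \<Prod>j\<in>J. (if t i < t j then 1 else 0 :: ennreal)) \<in> borel_measurable (PiM I M)"
    by (intro borel_measurable_prod_ennreal) (measurable, auto intro: comp simp: iI J_def)
  thus ?thesis by (simp only: ind_eq)
qed

lemma ring_bound:
  fixes g :: "(nat \<Rightarrow> real) \<Rightarrow> real"
  assumes N: "N \<ge> 1" and K: "K > 0" and TL: "TL > 0" and TR: "TR > 0"
    and Epos: "\<forall>j\<in>{1..N}. 0 < E j" and i: "i \<in> {1..N+1}" and c: "0 < c" and S: "0 < S"
    and gb: "\<And>p xL xR. 0 < p \<Longrightarrow> p < 1 \<Longrightarrow> 0 \<le> xL \<Longrightarrow> 0 \<le> xR \<Longrightarrow>
         g (jump N E i p xL xR) \<le> S powr (c-1) * (p powr (c-1) + (1-p) powr (c-1))"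
  shows "first_ring_exp K TL TR N E i (\<lambda>E'. ennreal (g E'))
     \<le> ennreal (clock_rate K TL TR N E i / total_rate K TL TR N E) * ennreal (S powr (c-1) * (Beta c 1 + Beta 1 c))"
proof -
  define r where "r = clock_rate K TL TR N E"
  have rpos: "0 < r j" if "j \<in> {1..N+1}" for j
  proof -
    have "0 < ext_cfg TL TR N E (j - 1)" using that TL Epos by (cases "j = 1") (auto simp: ext_cfg_def intro!: Epos[rule_format])
    moreover have "0 < ext_cfg TL TR N E j" using that TR Epos by (auto simp: ext_cfg_def)
    ultimately show ?thesis using K by (simp add: r_def clock_rate_def rate_fun_def)
  qed
  define MP where "MP = PiM {1..N+1} (\<lambda>j. density lborel (exponential_density (r j)))"
  define U where "U = uniform_measure lborel {0<..<(1::real)}"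
  define XL where "XL = density lborel (exponential_density (1 / TL))"
  define XR where "XR = density lborel (exponential_density (1 / TR))"
  have sp: "first_ring_space K TL TR N E = MP \<Otimes>\<^sub>M (U \<Otimes>\<^sub>M (XL \<Otimes>\<^sub>M XR))"
    by (simp add: first_ring_space_def MP_def U_def XL_def XR_def r_def)
  have pMP: "prob_space MP" unfolding MP_def
    by (rule prob_space_PiM, rule prob_space_exponential_density, rule rpos)
  have pU: "prob_space U" unfolding U_def by (rule prob_space_uniform_measure) auto
  have pXL: "prob_space XL" unfolding XL_def using TL by (intro prob_space_exponential_density) simp
  have pXR: "prob_space XR" unfolding XR_def using TR by (intro prob_space_exponential_density) simp
  define hp where "hp p = (if 0 < p \<and> p < 1 then ennreal (p powr (c-1) + (1-p) powr (c-1)) else \<top>)" for p :: real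
  define hb where "hb x = (if 0 \<le> x then 1 else \<top> :: ennreal)" for x :: real
  define H where "H w = ennreal (S powr (c-1)) * (hp (fst w) * (hb (fst (snd w)) * hb (snd (snd w))))" for w :: "real \<times> real \<times> real"
  define ind where "ind = (indicator (ring_first N i) :: (nat \<Rightarrow> real) \<Rightarrow> ennreal)"
  have hpm[measurable]: "hp \<in> borel_measurable U" unfolding hp_def U_def by measurable
  have hbm1[measurable]: "hb \<in> borel_measurable XL" unfolding hb_def XL_def by measurable
  have hbm2[measurable]: "hb \<in> borel_measurable XR" unfolding hb_def XR_def by measurable
  have indm: "ind \<in> borel_measurable MP"
    unfolding ind_def MP_def ring_first_def by (rule meas_ring) (use i in auto)
  have Sp: "0 < S powr (c-1)" using S by simp
  have step1: "first_ring_exp K TL TR N E i (\<lambda>E'. ennreal (g E'))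
      \<le> (\<integral>\<^sup>+\<omega>. ind (fst \<omega>) * H (snd \<omega>) \<partial>(MP \<Otimes>\<^sub>M (U \<Otimes>\<^sub>M (XL \<Otimes>\<^sub>M XR))))"
    unfolding first_ring_exp_def sp ind_def[symmetric]
  proof (intro nn_integral_mono mult_left_mono)
    fix \<omega> :: "(nat \<Rightarrow> real) \<times> real \<times> real \<times> real"
    obtain t p xL xR where om: "\<omega> = (t, p, xL, xR)" by (cases \<omega>) auto
    show "ennreal (g (jump N E i (fst (snd \<omega>)) (fst (snd (snd \<omega>))) (snd (snd (snd \<omega>))))) \<le> H (snd \<omega>)"
    proof (cases "0 < p \<and> p < 1 \<and> 0 \<le> xL \<and> 0 \<le> xR")
      case True
      hence "H (snd \<omega>) = ennreal (S powr (c-1) * (p powr (c-1) + (1-p) powr (c-1)))"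
        by (simp add: H_def hp_def hb_def om ennreal_mult')
      thus ?thesis using gb True by (simp add: om ennreal_leI)
    next
      case False
      hence "H (snd \<omega>) = \<top>" using Sp
        by (auto simp: H_def hp_def hb_def om ennreal_mult_eq_top_iff)
      thus ?thesis by simp
    qed
  qed simp
  also have "\<dots> = (\<integral>\<^sup>+t. ind t \<partial>MP) * (\<integral>\<^sup>+w. H w \<partial>(U \<Otimes>\<^sub>M (XL \<Otimes>\<^sub>M XR)))"
    by (rule nn_integral_pair_mult)
       (auto intro!: prob_space_imp_sigma_finite prob_space_pair pMP pU pXL pXR indm simp: H_def)
  also have "(\<integral>\<^sup>+w. H w \<partial>(U \<Otimes>\<^sub>M (XL \<Otimes>\<^sub>M XR)))
      = ennreal (S powr (c-1)) * ((\<integral>\<^sup>+p. hp p \<partial>U) * ((\<integral>\<^sup>+x. hb x \<partial>XL) * (\<integral>\<^sup>+x. hb x \<partial>XR)))"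
    unfolding H_def
    by (subst nn_integral_cmult, simp, subst nn_integral_pair_mult, 
        auto intro!: prob_space_imp_sigma_finite prob_space_pair pMP pU pXL pXR,
        subst nn_integral_pair_mult, auto intro!: prob_space_imp_sigma_finite pXL pXR)
  also have "(\<integral>\<^sup>+p. hp p \<partial>U) = ennreal (Beta c 1 + Beta 1 c)"
    unfolding hp_def U_def by (rule unif_int[OF c])
  also have "(\<integral>\<^sup>+x. hb x \<partial>XL) = 1"
    unfolding hb_def XL_def using TL by (intro nn_integral_exp_density_top) simp
  also have "(\<integral>\<^sup>+x. hb x \<partial>XR) = 1"
    unfolding hb_def XR_def using TR by (intro nn_integral_exp_density_top) simp
  also have "(\<integral>\<^sup>+t. ind t \<partial>MP) = ennreal (r i / (\<Sum>j\<in>{1..N+1}. r j))"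
    unfolding ind_def MP_def ring_first_def
    by (rule first_prob) (use i rpos in auto)
  finally show ?thesis
    by (simp add: r_def total_rate_def ennreal_mult'[symmetric] mult.commute)
qed

lemma jump_lower:
  assumes Epos: "\<forall>j\<in>{1..N}. 0 < E j" and n: "1 \<le> n" "n \<le> N" and k: "1 \<le> k" "k \<le> N - n + 1"
    and p: "0 < p" "p < 1" and x: "0 \<le> xL" "0 \<le> xR" and i: "i = k \<or> i = k + n"
  shows "\<exists>q\<in>{p, 1-p}. \<forall>j<n. q * E (k+j) \<le> jump N E i p xL xR (k+j)"
proof -
  have Ep: "0 < E m" if "1 \<le> m" "m \<le> N" for m using Epos that by auto
  have kjN: "k + j \<le> N" if "j < n" for j using that n k by linarith
  consider "i = k" "k = 1" | "i = k" "k \<noteq> 1" | "i = k + n" "k + n = N + 1" | "i = k + n" "k + n \<noteq> N + 1"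
    using i by blast
  thus ?thesis
  proof cases
    case 1
    show ?thesis
    proof (intro bexI[of _ p] allI impI)
      fix j assume j: "j < n"
      have E1: "0 < E (k+j)" using Ep[of "k+j"] kjN[OF j] k by simp
      show "p * E (k+j) \<le> jump N E i p xL xR (k+j)"
      proof (cases "j = 0")
        case True thus ?thesis using 1 p x by (simp add: jump_def algebra_simps)
      next
        case False thus ?thesis using 1 p E1 by (simp add: jump_def mult_le_cancel_right1)
      qed
    qed simp
  next
    case 2
    have kN: "k \<noteq> N + 1" using kjN[of 0] n by auto
    show ?thesis
    proof (intro bexI[of _ "1-p"] allI impI)
      fix j assume j: "j < n"
      have E1: "0 < E (k+j)" using Ep[of "k+j"] kjN[OF j] k by simp
      have E0: "0 < E (k-1)" using Ep[of "k-1"] 2 k kjN[OF j] by simp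
      show "(1-p) * E (k+j) \<le> jump N E i p xL xR (k+j)"
      proof (cases "j = 0")
        case True thus ?thesis using 2 kN p E0 by (simp add: jump_def mult_left_mono)
      next
        case False
        have "k + j \<noteq> k - 1" using k by arith
        thus ?thesis using False 2 kN p E1 by (simp add: jump_def mult_le_cancel_right1)
      qed
    qed simp
  next
    case 3
    have kn1: "k + n \<noteq> 1" using k n by simp
    show ?thesis
    proof (intro bexI[of _ p] allI impI)
      fix j assume j: "j < n"
      have E1: "0 < E (k+j)" using Ep[of "k+j"] kjN[OF j] k by simp
      show "p * E (k+j) \<le> jump N E i p xL xR (k+j)"
      proof (cases "k + j = N")
        case True thus ?thesis using 3 kn1 p x by (simp add: jump_def algebra_simps)
      next
        case False thus ?thesis using 3 kn1 p E1 by (simp add: jump_def mult_le_cancel_right1)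
      qed
    qed simp
  next
    case 4
    have kn1: "k + n \<noteq> 1" using k n by simp
    have knN: "k + n \<le> N" using 4 k n by linarith
    show ?thesis
    proof (intro bexI[of _ p] allI impI)
      fix j assume j: "j < n"
      have E1: "0 < E (k+j)" using Ep[of "k+j"] kjN[OF j] k by simp
      have E2: "0 < E (k+n)" using Ep[of "k+n"] knN k by simp
      have ne: "k + j \<noteq> k + n" using j by simp
      show "p * E (k+j) \<le> jump N E i p xL xR (k+j)"
      proof (cases "k + j = k + n - 1")
        case True thus ?thesis using 4 kn1 p E2 ne by (simp add: jump_def algebra_simps)
      next
        case False thus ?thesis using 4 kn1 p E1 ne by (simp add: jump_def mult_le_cancel_right1)
      qed
    qed simp
  qed
qed

lemma V_bound:
  assumes Epos: "\<forall>j\<in>{1..N}. 0 < E j" and n: "1 \<le> n" "n \<le> N" and k: "1 \<le> k" "k \<le> N - n + 1"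
    and p: "0 < p" "p < 1" and x: "0 \<le> xL" "0 \<le> xR" and i: "i = k \<or> i = k + n"
    and c: "c \<le> 1"
  shows "(\<Sum>j<n. jump N E i p xL xR (k+j)) powr (c-1)
     \<le> (\<Sum>j<n. E (k+j)) powr (c-1) * (p powr (c-1) + (1-p) powr (c-1))"
proof -
  obtain q where q: "q \<in> {p, 1-p}" and qb: "\<And>j. j < n \<Longrightarrow> q * E (k+j) \<le> jump N E i p xL xR (k+j)"
    using jump_lower[OF Epos n k p x i] by blast
  define S where "S = (\<Sum>j<n. E (k+j))"
  have "0 < E (k + 0)" using Epos k n by auto
  hence Sp: "0 < S" unfolding S_def using Epos k n
    by (intro sum_pos2[of _ 0]) (auto intro!: less_imp_le)
  have qp: "0 < q" using q p by auto
  have "q * S \<le> (\<Sum>j<n. jump N E i p xL xR (k+j))"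
    unfolding S_def sum_distrib_left by (intro sum_mono qb) simp
  hence "(\<Sum>j<n. jump N E i p xL xR (k+j)) powr (c-1) \<le> (q * S) powr (c-1)"
    using c qp Sp by (intro powr_mono2') auto
  also have "\<dots> = S powr (c-1) * q powr (c-1)" by (simp add: powr_mult)
  also have "\<dots> \<le> S powr (c-1) * (p powr (c-1) + (1-p) powr (c-1))"
    using q by (intro mult_left_mono) auto
  finally show ?thesis by (simp add: S_def)
qed

lemma Beta_nonneg1: "0 < (c::real) \<Longrightarrow> 0 \<le> Beta c 1"
  using has_integral_nonneg[OF has_integral_Beta_real[of c 1]] by simp

lemma Beta_nonneg2: "0 < (c::real) \<Longrightarrow> 0 \<le> Beta 1 c"
  using has_integral_nonneg[OF has_integral_Beta_real[of 1 c]] by simp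

lemma a_coef_props:
  assumes "1 \<le> n" "n \<le> N"
  shows "0 < a_coef N N" "a_coef N N \<le> a_coef N n" "a_coef N n \<le> 1"
proof -
  have N1: "(2::real) ^ N - 1 > 0" using assms by (simp add: one_less_power)
  have "(2::real) ^ (N - 1) < 2 ^ N" using assms by (intro power_strict_increasing) auto
  hence "((2::real) ^ (N - 1) - 1) / (2 ^ N - 1) < 1" using N1 by simp
  thus "0 < a_coef N N" by (simp add: a_coef_def)
  have "(2::real) ^ (n - 1) \<le> 2 ^ (N - 1)" using assms by (intro power_increasing) auto
  thus "a_coef N N \<le> a_coef N n" using N1 by (simp add: a_coef_def divide_right_mono)
  have "(1::real) \<le> 2 ^ (n - 1)" by simp
  thus "a_coef N n \<le> 1" using N1 by (simp add: a_coef_def)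
qed

theorem lemma4p2:
  fixes N :: nat and TL TR :: real
  assumes "N \<ge> 1" and "TL > 0" and "TR > 0"
  shows "\<exists>K0. \<forall>K \<ge> K0. \<exists>\<eta>0 > 0. \<forall>\<eta>. 0 < \<eta> \<and> \<eta> < \<eta>0 \<longrightarrow>
    (\<exists>C > 0. \<forall>E n k. (\<forall>i \<in> {1..N}. E i > 0) \<longrightarrow> 1 \<le> n \<longrightarrow> n \<le> N \<longrightarrow>
        1 \<le> k \<longrightarrow> k \<le> N - n + 1 \<longrightarrow>
       first_ring_exp K TL TR N E k (\<lambda>E'. ennreal (V_fun N \<eta> n k E'))
         \<le> ennreal (C / total_rate K TL TR N E * (\<Sum>i < n. E (k + i)) powr (a_coef N n * \<eta> - 1 / 2))
     \<and> first_ring_exp K TL TR N E (k + n) (\<lambda>E'. ennreal (V_fun N \<eta> n k E'))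
         \<le> ennreal (C / total_rate K TL TR N E * (\<Sum>i < n. E (k + i)) powr (a_coef N n * \<eta> - 1 / 2)))"
proof -
  have main: "\<exists>C > 0. \<forall>E n k. (\<forall>i \<in> {1..N}. E i > 0) \<longrightarrow> 1 \<le> n \<longrightarrow> n \<le> N \<longrightarrow>
        1 \<le> k \<longrightarrow> k \<le> N - n + 1 \<longrightarrow>
       first_ring_exp K TL TR N E k (\<lambda>E'. ennreal (V_fun N \<eta> n k E'))
         \<le> ennreal (C / total_rate K TL TR N E * (\<Sum>i < n. E (k + i)) powr (a_coef N n * \<eta> - 1 / 2))
     \<and> first_ring_exp K TL TR N E (k + n) (\<lambda>E'. ennreal (V_fun N \<eta> n k E'))
         \<le> ennreal (C / total_rate K TL TR N E * (\<Sum>i < n. E (k + i)) powr (a_coef N n * \<eta> - 1 / 2))"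
    if K: "1 \<le> K" and eta: "0 < \<eta>" "\<eta> < 1" for K \<eta> :: real
  proof -
    define c0 where "c0 = a_coef N N * \<eta>"
    define C where "C = Beta c0 1 + Beta 1 c0 + 1"
    have c0p: "0 < c0" using a_coef_props(1)[of N N] assms(1) eta by (simp add: c0_def)
    have Cp: "0 < C" using Beta_nonneg1[OF c0p] Beta_nonneg2[OF c0p] by (simp add: C_def)
    show ?thesis
    proof (intro exI[of _ C] conjI allI impI Cp)
      fix E :: "nat \<Rightarrow> real" and n k :: nat
      assume Epos: "\<forall>i\<in>{1..N}. 0 < E i" and n1: "1 \<le> n" and nN: "n \<le> N"
        and k1: "1 \<le> k" and kN: "k \<le> N - n + 1"
      define c where "c = a_coef N n * \<eta>"
      define S where "S = (\<Sum>i<n. E (k+i))"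
      have ac: "0 < a_coef N N" "a_coef N N \<le> a_coef N n" "a_coef N n \<le> 1"
        using a_coef_props[OF n1 nN] by auto
      have cp: "0 < c" using ac eta by (simp add: c_def)
      have c1: "c \<le> 1" using ac eta unfolding c_def
        by (metis less_eq_real_def mult_le_one order.strict_trans2 order_less_imp_le)
      have c0c: "c0 \<le> c" using ac eta by (simp add: c_def c0_def)
      have Ekj: "0 < E (k+j)" if "j < n" for j using Epos that k1 kN nN by auto
      have "0 < E (k + 0)" using Ekj[of 0] n1 by simp
      hence Sp: "0 < S" unfolding S_def using Ekj n1 by (intro sum_pos2[of _ 0]) (auto intro!: less_imp_le)
      have EleS: "E (k+j) \<le> S" if "j < n" for j
        unfolding S_def using that Ekj by (intro member_le_sum) (auto intro!: less_imp_le)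
      have BleC: "Beta c 1 + Beta 1 c \<le> C"
        using Beta_real_mono[of c0 c 1 1] Beta_real_mono[of 1 1 c0 c] c0p c0c by (simp add: C_def)
      have Bnn: "0 \<le> Beta c 1 + Beta 1 c" using Beta_nonneg1[OF cp] Beta_nonneg2[OF cp] by simp
      define R where "R = total_rate K TL TR N E"
      have rpos: "0 < clock_rate K TL TR N E j" if "j \<in> {1..N+1}" for j
      proof -
        have "0 < ext_cfg TL TR N E (j - 1)" using that assms(2) Epos
          by (cases "j = 1") (auto simp: ext_cfg_def intro!: Epos[rule_format])
        moreover have "0 < ext_cfg TL TR N E j" using that assms(3) Epos by (auto simp: ext_cfg_def)
        ultimately show ?thesis using K by (simp add: clock_rate_def rate_fun_def)
      qed
      have Rpos: "0 < R" unfolding R_def total_rate_def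
        by (rule sum_pos) (auto intro: rpos)
      have fin: "first_ring_exp K TL TR N E i (\<lambda>E'. ennreal (V_fun N \<eta> n k E')) \<le> ennreal (C / R * S powr (c - 1/2))"
        if i: "i = k \<or> i = k + n" and rb: "clock_rate K TL TR N E i \<le> sqrt S" for i
      proof -
        let ?r = "clock_rate K TL TR N E i"
        have iI: "i \<in> {1..N+1}" using i k1 kN nN by auto
        have rp: "0 < ?r" using rpos[OF iI] .
        have "first_ring_exp K TL TR N E i (\<lambda>E'. ennreal (V_fun N \<eta> n k E'))
          \<le> ennreal (?r / R) * ennreal (S powr (c-1) * (Beta c 1 + Beta 1 c))"
          unfolding R_def
        proof (rule ring_bound[OF assms(1) _ assms(2,3) Epos iI cp Sp])
          show "0 < K" using K by simp
          fix p xL xR :: real assume "0 < p" "p < 1" "0 \<le> xL" "0 \<le> xR"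
          thus "V_fun N \<eta> n k (jump N E i p xL xR) \<le> S powr (c-1) * (p powr (c-1) + (1-p) powr (c-1))"
            unfolding V_fun_def S_def c_def
            using V_bound[OF Epos n1 nN k1 kN _ _ _ _ i, of p xL xR "a_coef N n * \<eta>"] c1
            by (simp add: c_def)
        qed
        also have "\<dots> = ennreal (?r / R * (S powr (c-1) * (Beta c 1 + Beta 1 c)))"
          using rp Rpos Bnn by (subst ennreal_mult[symmetric]) auto
        also have "\<dots> \<le> ennreal (C / R * S powr (c - 1/2))"
        proof (rule ennreal_leI)
          have "?r * (S powr (c-1) * (Beta c 1 + Beta 1 c)) \<le> S powr (1/2) * (S powr (c-1) * C)"
            using rb Sp Bnn BleC rp
            by (intro mult_mono) (auto simp: powr_half_sqrt)
          also have "\<dots> = C * S powr (c - 1/2)"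
            by (simp add: powr_add[symmetric])
          finally show "?r / R * (S powr (c-1) * (Beta c 1 + Beta 1 c)) \<le> C / R * S powr (c - 1/2)"
            using Rpos by (simp add: divide_right_mono)
        qed
        finally show ?thesis .
      qed
      have kle: "k \<le> N" using kN n1 nN by linarith
      have rb1: "clock_rate K TL TR N E k \<le> sqrt S"
      proof -
        have "clock_rate K TL TR N E k \<le> sqrt (E k)"
          using k1 kle by (simp add: clock_rate_def rate_fun_def ext_cfg_def min_le_iff_disj)
        also have "\<dots> \<le> sqrt S" using EleS[of 0] n1 by simp
        finally show ?thesis .
      qed
      have rb2: "clock_rate K TL TR N E (k + n) \<le> sqrt S"
      proof -
        have ne: "k + n - 1 \<noteq> 0" "k + n - 1 \<noteq> N + 1" using k1 n1 kN nN by auto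
        have "clock_rate K TL TR N E (k + n) \<le> sqrt (E (k + n - 1))"
          using ne by (simp add: clock_rate_def rate_fun_def ext_cfg_def min_le_iff_disj)
        also have "\<dots> \<le> sqrt S" using EleS[of "n - 1"] n1 by simp
        finally show ?thesis .
      qed
      show "first_ring_exp K TL TR N E k (\<lambda>E'. ennreal (V_fun N \<eta> n k E'))
         \<le> ennreal (C / total_rate K TL TR N E * (\<Sum>i < n. E (k + i)) powr (a_coef N n * \<eta> - 1 / 2))"
        using fin[OF _ rb1] by (simp add: R_def S_def c_def)
      show "first_ring_exp K TL TR N E (k + n) (\<lambda>E'. ennreal (V_fun N \<eta> n k E'))
         \<le> ennreal (C / total_rate K TL TR N E * (\<Sum>i < n. E (k + i)) powr (a_coef N n * \<eta> - 1 / 2))"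
        using fin[OF _ rb2] by (simp add: R_def S_def c_def)
    qed
  qed
  show ?thesis
  proof (rule exI[of _ 1], intro allI impI)
    fix K :: real assume K: "1 \<le> K"
    show "\<exists>\<eta>0>0. \<forall>\<eta>. 0 < \<eta> \<and> \<eta> < \<eta>0 \<longrightarrow> (\<exists>C > 0. \<forall>E n k. (\<forall>i \<in> {1..N}. E i > 0) \<longrightarrow> 1 \<le> n \<longrightarrow> n \<le> N \<longrightarrow>
        1 \<le> k \<longrightarrow> k \<le> N - n + 1 \<longrightarrow>
       first_ring_exp K TL TR N E k (\<lambda>E'. ennreal (V_fun N \<eta> n k E'))
         \<le> ennreal (C / total_rate K TL TR N E * (\<Sum>i < n. E (k + i)) powr (a_coef N n * \<eta> - 1 / 2))
     \<and> first_ring_exp K TL TR N E (k + n) (\<lambda>E'. ennreal (V_fun N \<eta> n k E'))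
         \<le> ennreal (C / total_rate K TL TR N E * (\<Sum>i < n. E (k + i)) powr (a_coef N n * \<eta> - 1 / 2)))"
      using main[OF K] by (intro exI[of _ 1]) auto
  qed
qed

end
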